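(* Let $q$ be a prime power and $m$ a positive integer with $m\mid q-1$. Let $\mathrm{Fix}(a)$ be the set of cyclic subgroups $H\le D(2,q)$ of order $m$ with $aHa^{-1}=H$; every such $H$ is of the form $\langle\mathrm{dia}(\lambda,\lambda^l)\rangle$ with $\lambda\in\mathbb{F}_q^*$ of order $m$ and $l\in(\mathbb{Z}/m\mathbb{Z})^\times$, $l^2\equiv1\pmod m$, with $l$ uniquely determined by $H$. Then the map $\mathrm{Fix}(a)\to\mathrm{Aut}(\mathbb{Z}_m)\cong(\mathbb{Z}/m\mathbb{Z})^\times$, $\langle\mathrm{dia}(\lambda,\lambda^l)\rangle\mapsto l$, is bijective if and only if $m=2^t3^s$ with $0\le t\le 3$ and $0\le s\le 1$.
   Context: $D(2,q)$ is the group of invertible diagonal $2\times2$ matrices over $\mathbb{F}_q$; $\mathrm{dia}(d_1,d_2)$ denotes the diagonal matrix with diagonal entries $d_1,d_2$; $a=\begin{pmatrix}0&1\\1&0\end{pmatrix}$. *)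

theory Defs
  imports "HOL-Analysis.Analysis" "HOL-Number_Theory.Cong"
begin

text \<open>2x2 matrices over a finite field 'a (so q = CARD('a), a prime power).
  Matrices are elements of 'a^2^2 with product (**), identity mat 1.\<close>

definition dia :: "'a::field \<Rightarrow> 'a \<Rightarrow> 'a^2^2" where
  "dia d1 d2 = (\<chi> i j. if i = j then (if i = 1 then d1 else d2) else 0)"

definition Dgrp :: "(('a::field)^2^2) set" where
  "Dgrp = {dia d1 d2 | d1 d2. d1 \<noteq> 0 \<and> d2 \<noteq> 0}"

definition amat :: "('a::field)^2^2" where
  "amat = (\<chi> i j. if i = j then 0 else 1)"

fun mpow :: "('a::field)^2^2 \<Rightarrow> nat \<Rightarrow> 'a^2^2" where
  "mpow M 0 = mat 1"
| "mpow M (Suc n) = M ** mpow M n"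

definition cyc :: "('a::field)^2^2 \<Rightarrow> ('a^2^2) set" where
  "cyc g = {mpow g n | n. True}"

definition ford :: "'a::field \<Rightarrow> nat" where
  "ford x = (LEAST n. n > 0 \<and> x ^ n = 1)"

definition FixA :: "nat \<Rightarrow> (('a::{field,finite})^2^2) set set" where
  "FixA m = {H. (\<exists>g \<in> Dgrp. H = cyc g) \<and> card H = m \<and>
                 (\<lambda>M. amat ** M ** matrix_inv amat) ` H = H}"

definition unitsmod :: "nat \<Rightarrow> nat set" where
  "unitsmod m = {l. l < m \<and> coprime l m}"

definition fixmap :: "nat \<Rightarrow> (('a::{field,finite})^2^2) set \<Rightarrow> nat" where
  "fixmap m H = (THE l. l \<in> unitsmod m \<and> [l ^ 2 = 1] (mod m) \<and>
        (\<exists>lam::'a. lam \<noteq> 0 \<and> ford lam = m \<and> H = cyc (dia lam (lam ^ l))))"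

end

theory Submission
  imports Defs "HOL-Algebra.Multiplicative_Group" "HOL-Computational_Algebra.Polynomial" "HOL-Computational_Algebra.Primes"
begin


lemma dia_mult: "dia a b ** dia c d = dia (a*c) (b*d)"
  by (simp add: dia_def matrix_matrix_mult_def vec_eq_iff sum_2 forall_2)

lemma mat1_dia: "mat 1 = (dia 1 1 :: 'a::field^2^2)"
  by (simp add: dia_def mat_def vec_eq_iff forall_2)

lemma mpow_dia: "mpow (dia a b) n = dia (a^n) (b^n)"
  by (induction n) (simp_all add: mat1_dia dia_mult)

lemma dia_eq: "dia a b = dia c d \<longleftrightarrow> a = c \<and> b = d"
proof
  assume h: "dia a b = dia c d"
  have "dia a b $ 1 $ 1 = a" "dia a b $ 2 $ 2 = b" "dia c d $ 1 $ 1 = c" "dia c d $ 2 $ 2 = d"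
    by (simp_all add: dia_def)
  thus "a = c \<and> b = d" using h by metis
qed simp

lemma amat_sq: "amat ** amat = (mat 1::'a::field^2^2)"
  by (simp add: amat_def mat_def matrix_matrix_mult_def vec_eq_iff sum_2 forall_2)

lemma amat_inv: "matrix_inv (amat::'a::field^2^2) = amat"
proof -
  let ?P = "\<lambda>A'. amat ** A' = mat 1 \<and> A' ** amat = (mat 1 :: 'a^2^2)"
  have "?P amat" using amat_sq by simp
  hence "?P (matrix_inv amat)" unfolding matrix_inv_def by (rule someI)
  hence h: "amat ** matrix_inv amat = (mat 1 :: 'a^2^2)" by blast
  have "matrix_inv amat = (mat 1 :: 'a^2^2) ** matrix_inv amat" by (rule matrix_mul_lid[symmetric])
  also have "\<dots> = (amat ** amat) ** matrix_inv amat" by (simp only: amat_sq)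
  also have "\<dots> = amat ** (amat ** matrix_inv amat)" by (rule matrix_mul_assoc[symmetric])
  also have "\<dots> = amat ** mat 1" by (simp only: h)
  also have "\<dots> = amat" by (rule matrix_mul_rid)
  finally show ?thesis .
qed

lemma amat_conj: "amat ** dia a b ** amat = dia b a"
  by (simp add: amat_def dia_def matrix_matrix_mult_def vec_eq_iff sum_2 forall_2)

lemma cyc_dia: "cyc (dia a b) = {dia (a^n) (b^n) | n. True}"
  by (simp add: cyc_def mpow_dia)

lemma cyc_pow: "cyc (dia x (x^k)) = {dia (x^n) (x^(k*n)) | n. True}"
  by (simp add: cyc_dia power_mult)



lemma ford_ex:
  fixes x :: "'a::{field,finite}"
  assumes "x \<noteq> 0" shows "\<exists>n>0. x ^ n = 1"
proof -
  have "\<not> inj (\<lambda>n::nat. x ^ n)"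
  proof
    assume "inj (\<lambda>n::nat. x ^ n)"
    moreover have "finite (range (\<lambda>n::nat. x ^ n))" by simp
    ultimately have "finite (UNIV :: nat set)" using finite_imageD by blast
    thus False by simp
  qed
  then obtain i j :: nat where ij: "i \<noteq> j" "x ^ i = x ^ j" unfolding inj_def by blast
  have *: "\<exists>n>0. x ^ n = 1" if "i < j" "x ^ i = x ^ j" for i j
  proof -
    have "x ^ i * x ^ (j - i) = x ^ j" using that(1) by (simp flip: power_add)
    hence "x ^ i * x ^ (j - i) = x ^ i * 1" using that(2) by simp
    hence "x ^ (j - i) = 1" using assms by simp
    thus ?thesis using that(1) by (intro exI[of _ "j - i"]) simp
  qed
  show ?thesis using ij *[of i j] *[of j i] by (cases "i < j") auto
qed

lemma ford_pos: fixes x :: "'a::{field,finite}" assumes "x \<noteq> 0"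
  shows "ford x > 0 \<and> x ^ ford x = 1"
  using LeastI_ex[OF ford_ex[OF assms]] unfolding ford_def by blast

lemma ford_dvd: fixes x :: "'a::{field,finite}" assumes "x \<noteq> 0"
  shows "x ^ n = 1 \<longleftrightarrow> ford x dvd n"
proof
  assume "ford x dvd n" then obtain k where "n = ford x * k" by auto
  thus "x ^ n = 1" using ford_pos[OF assms] by (simp add: power_mult)
next
  assume h: "x ^ n = 1"
  let ?d = "ford x"
  have "x ^ n = x ^ (?d * (n div ?d) + n mod ?d)" by simp
  also have "\<dots> = (x ^ ?d) ^ (n div ?d) * x ^ (n mod ?d)" by (simp only: power_add power_mult)
  finally have "x ^ n = (x ^ ?d) ^ (n div ?d) * x ^ (n mod ?d)" .
  hence "x ^ (n mod ?d) = 1" using h ford_pos[OF assms] by simp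
  moreover have "n mod ?d < ?d" using ford_pos[OF assms] by simp
  hence "\<not> (n mod ?d > 0 \<and> x ^ (n mod ?d) = 1)"
    unfolding ford_def by (rule not_less_Least)
  with \<open>x ^ (n mod ?d) = 1\<close> have "\<not> n mod ?d > 0" by auto
  thus "ford x dvd n" by auto
qed

lemma ford_eq: fixes x :: "'a::{field,finite}" assumes "x \<noteq> 0"
  shows "x ^ i = x ^ j \<longleftrightarrow> [i = j] (mod ford x)"
proof -
  have *: "x ^ i = x ^ j \<longleftrightarrow> [i = j] (mod ford x)" if "i \<le> j" for i j
  proof -
    have "x ^ j = x ^ i * x ^ (j - i)" using that by (simp flip: power_add)
    hence "x ^ i = x ^ j \<longleftrightarrow> x ^ i = x ^ i * x ^ (j - i)" by simp
    also have "\<dots> \<longleftrightarrow> x ^ (j - i) = 1" using assms by (simp only: mult_cancel_left1) simp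
    also have "\<dots> \<longleftrightarrow> ford x dvd j - i" by (rule ford_dvd[OF assms])
    also have "\<dots> \<longleftrightarrow> [j = i] (mod ford x)" using that by (simp add: cong_altdef_nat)
    finally show ?thesis by (simp add: cong_sym_eq)
  qed
  show ?thesis using *[of i j] *[of j i] by (cases "i \<le> j") (auto simp: cong_sym_eq)
qed

lemma mem_cyc_pow: "M \<in> cyc (dia x (x^k)) \<longleftrightarrow> (\<exists>n. M = dia (x^n) (x^(k*n)))"
  by (auto simp: cyc_pow)

lemma card_cyc: fixes x :: "'a::{field,finite}" assumes "x \<noteq> 0"
  shows "card (cyc (dia x (x^k))) = ford x"
proof -
  let ?d = "ford x" let ?f = "\<lambda>n. dia (x^n) (x^(k*n))"
  have "cyc (dia x (x^k)) = ?f ` {..<?d}"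
  proof
    show "cyc (dia x (x^k)) \<subseteq> ?f ` {..<?d}"
    proof
      fix M assume "M \<in> cyc (dia x (x^k))"
      then obtain n where M: "M = ?f n" by (auto simp: mem_cyc_pow)
      have "x^n = x^(n mod ?d)" using ford_eq[OF assms] by (simp add: cong_def)
      moreover have "x^(k*n) = x^(k*(n mod ?d))" using ford_eq[OF assms] by (simp add: cong_def mod_mult_right_eq)
      ultimately have "M = ?f (n mod ?d)" using M by simp
      moreover have "n mod ?d < ?d" using ford_pos[OF assms] by simp
      ultimately show "M \<in> ?f ` {..<?d}" by blast
    qed
    show "?f ` {..<?d} \<subseteq> cyc (dia x (x^k))" by (auto simp: mem_cyc_pow)
  qed
  moreover have "inj_on ?f {..<?d}"
  proof
    fix i j assume "i \<in> {..<?d}" "j \<in> {..<?d}" "?f i = ?f j"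
    hence "x^i = x^j" "i < ?d" "j < ?d" by (auto simp: dia_eq)
    thus "i = j" using ford_eq[OF assms] cong_less_modulus_unique_nat by blast
  qed
  ultimately show ?thesis by (simp add: card_image)
qed

lemma roots_card: assumes "m \<ge> 1" shows "card {x::'a::{field,finite}. x^m = 1} \<le> m"
proof -
  let ?p = "[:-1:] + Polynomial.monom (1::'a) m"
  have dg: "degree ?p = m"
    using assms by (subst degree_add_eq_right) (auto simp: degree_monom_eq)
  hence "?p \<noteq> 0" using assms by auto
  hence "card {x. poly ?p x = 0} \<le> m" using card_poly_roots_bound dg by metis
  moreover have "{x. poly ?p x = 0} = {x::'a. x^m = 1}" by (auto simp: poly_monom)
  ultimately show ?thesis by simp
qed

lemma pow_of: fixes lam mu :: "'a::{field,finite}"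
  assumes "lam \<noteq> 0" "ford lam = m" "mu ^ m = 1" shows "\<exists>i. mu = lam ^ i"
proof -
  have m1: "m \<ge> 1" using ford_pos[OF assms(1)] assms(2) by simp
  let ?S = "(\<lambda>i. lam ^ i) ` {..<m}"
  have "inj_on (\<lambda>i. lam ^ i) {..<m}"
    by (rule inj_onI) (use ford_eq[OF assms(1)] assms(2) cong_less_modulus_unique_nat in auto)
  hence cS: "card ?S = m" by (simp add: card_image)
  have sub: "?S \<subseteq> {x. x^m = 1}"
  proof
    fix y assume "y \<in> ?S" then obtain i where "y = lam ^ i" by auto
    hence "y ^ m = (lam ^ m) ^ i" by (simp flip: power_mult add: mult.commute)
    thus "y \<in> {x. x^m = 1}" using ford_pos[OF assms(1)] assms(2) by simp
  qed
  have "?S = {x. x^m = 1}"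
    by (rule card_seteq) (use sub cS roots_card[OF m1, where 'a='a] in auto)
  thus ?thesis using assms(3) by blast
qed

lemma cyc_sub: fixes lam :: "'a::{field,finite}"
  assumes "mu = lam ^ i" shows "cyc (dia mu (mu^l)) \<subseteq> cyc (dia lam (lam^l))"
proof
  fix M assume "M \<in> cyc (dia mu (mu^l))"
  then obtain n where "M = dia (mu^n) (mu^(l*n))" by (auto simp: mem_cyc_pow)
  hence "M = dia (lam^(i*n)) (lam^(l*(i*n)))" using assms by (simp flip: power_mult add: mult_ac)
  thus "M \<in> cyc (dia lam (lam^l))" by (auto simp: mem_cyc_pow)
qed

lemma cyc_same: fixes lam mu :: "'a::{field,finite}"
  assumes "lam \<noteq> 0" "mu \<noteq> 0" "ford lam = m" "ford mu = m"
  shows "cyc (dia lam (lam^l)) = cyc (dia mu (mu^l))"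
proof -
  obtain i where "mu = lam ^ i" using pow_of[OF assms(1,3)] ford_pos[OF assms(2)] assms(4) by blast
  moreover obtain j where "lam = mu ^ j" using pow_of[OF assms(2,4)] ford_pos[OF assms(1)] assms(3) by blast
  ultimately show ?thesis using cyc_sub by blast
qed

lemma fix_uniq: fixes lam mu :: "'a::{field,finite}"
  assumes "lam \<noteq> 0" "mu \<noteq> 0" "ford lam = m" "ford mu = m" "l < m" "l' < m"
    "cyc (dia lam (lam^l)) = cyc (dia mu (mu^l'))"
  shows "l = l'"
proof -
  have "dia mu (mu^l') \<in> cyc (dia mu (mu^l'))" unfolding mem_cyc_pow by (rule exI[of _ 1]) simp
  hence "dia mu (mu^l') \<in> cyc (dia lam (lam^l))" using assms(7) by simp
  then obtain i where "dia mu (mu^l') = dia (lam^i) (lam^(l*i))" unfolding mem_cyc_pow by blast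
  hence i: "mu = lam^i" "mu^l' = lam^(l*i)" unfolding dia_eq by blast+
  have "dia lam (lam^l) \<in> cyc (dia lam (lam^l))" unfolding mem_cyc_pow by (rule exI[of _ 1]) simp
  hence "dia lam (lam^l) \<in> cyc (dia mu (mu^l'))" using assms(7) by simp
  then obtain j where "dia lam (lam^l) = dia (mu^j) (mu^(l'*j))" unfolding mem_cyc_pow by blast
  hence j: "lam = mu^j" unfolding dia_eq by blast
  have "lam ^ 1 = lam ^ (i*j)" using i j by (simp add: power_mult)
  hence ij: "[1 = i*j] (mod m)" using iffD1[OF ford_eq[OF assms(1), of 1 "i*j"]] assms(3) by blast
  have "lam ^ (i*l') = lam^(l*i)" using i by (simp add: power_mult)
  hence il: "[i*l' = l*i] (mod m)" using iffD1[OF ford_eq[OF assms(1), of "i*l'" "l*i"]] assms(3) by blast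
  have a: "[(i*j)*l' = (i*j)*l] (mod m)"
  proof -
    have "[j*(i*l') = j*(l*i)] (mod m)" using il by (rule cong_scalar_left)
    moreover have "j*(i*l') = (i*j)*l'" "j*(l*i) = (i*j)*l" by (simp_all add: mult_ac)
    ultimately show ?thesis by simp
  qed
  have b: "[(i*j)*l' = 1*l'] (mod m)" using ij by (intro cong_scalar_right) (rule cong_sym)
  have c: "[(i*j)*l = 1*l] (mod m)" using ij by (intro cong_scalar_right) (rule cong_sym)
  have "[l' = l] (mod m)"
    using cong_trans[OF cong_trans[OF cong_sym[OF b] a] c] by simp
  thus ?thesis using assms(5,6) cong_less_modulus_unique_nat by metis
qed



definition tring :: "'a::field ring" where
  "tring = \<lparr>carrier = UNIV, monoid.mult = (\<lambda>x y. x * y), one = 1, zero = 0, add = (\<lambda>x y. x + y)\<rparr>"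

lemma field_tring: "field (tring :: 'a::field ring)"
proof -
  have "\<exists>y. x + y = 0" for x :: 'a
    using add.right_inverse by blast
  moreover have "x \<noteq> 0 \<Longrightarrow> \<exists>y. x * y = 1" for x :: 'a
    by (rule exI[of _ "inverse x"]) auto
  ultimately show ?thesis
    unfolding tring_def using add.right_inverse
    by unfold_locales (auto simp: algebra_simps Units_def)
qed

lemma gen_exists: "\<exists>g::'a::{field,finite}. g \<noteq> 0 \<and> (\<forall>x. x \<noteq> 0 \<longrightarrow> (\<exists>i. x = g^i))"
proof -
  interpret R: field "tring :: 'a ring" by (rule field_tring)
  have "finite (carrier (tring :: 'a ring))" by (simp add: tring_def)
  then obtain a where a: "a \<in> carrier (mult_of (tring::'a ring))" and
     c: "carrier (mult_of (tring::'a ring)) = {a [^]\<^bsub>(tring::'a ring)\<^esub> i | i::nat. i \<in> UNIV}"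
    using R.finite_field_mult_group_has_gen by blast
  have pw: "a [^]\<^bsub>(tring::'a ring)\<^esub> (i::nat) = a ^ i" for i
    by (induction i) (simp_all add: tring_def power_Suc2)
  have cm: "carrier (mult_of (tring::'a ring)) = {x. x \<noteq> 0}" by (auto simp: tring_def)
  show ?thesis
  proof (rule exI[of _ a], intro conjI allI impI)
    show "a \<noteq> 0" using a by (simp add: tring_def)
    fix x :: 'a assume "x \<noteq> 0"
    hence "x \<in> carrier (mult_of (tring::'a ring))" using cm by simp
    thus "\<exists>i. x = a ^ i" using c pw by auto
  qed
qed

lemma ord_exists:
  assumes "m > 0" "m dvd CARD('a::{field,finite}) - 1"
  shows "\<exists>lam::'a. lam \<noteq> 0 \<and> ford lam = m"
proof -
  obtain g :: 'a where g: "g \<noteq> 0" "\<And>x. x \<noteq> 0 \<Longrightarrow> \<exists>i. x = g^i" using gen_exists by blast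
  let ?d = "ford g"
  have "{x::'a. x \<noteq> 0} = (\<lambda>i. g^i) ` {..<?d}"
  proof
    show "{x::'a. x \<noteq> 0} \<subseteq> (\<lambda>i. g^i) ` {..<?d}"
    proof
      fix x :: 'a assume "x \<in> {x. x \<noteq> 0}"
      then obtain i where i: "x = g^i" using g(2) by blast
      have "g^i = g^(i mod ?d)" using ford_eq[OF g(1)] by (simp add: cong_def)
      moreover have "i mod ?d < ?d" using ford_pos[OF g(1)] by simp
      ultimately show "x \<in> (\<lambda>i. g^i) ` {..<?d}" using i by blast
    qed
    show "(\<lambda>i. g^i) ` {..<?d} \<subseteq> {x::'a. x \<noteq> 0}" using g(1) by auto
  qed
  moreover have "inj_on (\<lambda>i. g^i) {..<?d}"
    by (rule inj_onI) (use ford_eq[OF g(1)] cong_less_modulus_unique_nat in auto)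
  ultimately have "card {x::'a. x \<noteq> 0} = ?d" by (simp add: card_image)
  moreover have "{x::'a. x \<noteq> 0} = UNIV - {0}" by auto
  ultimately have dN: "?d = CARD('a) - 1" by (simp add: card_Diff_singleton)
  obtain k where k: "CARD('a) - 1 = m * k" using assms(2) by blast
  have kpos: "k > 0" using k dN ford_pos[OF g(1)] by (cases k) auto
  let ?lam = "g ^ k"
  have lnz: "?lam \<noteq> 0" using g(1) by simp
  have eqv: "ford ?lam dvd n \<longleftrightarrow> m dvd n" for n
  proof -
    have "ford ?lam dvd n \<longleftrightarrow> ?lam ^ n = 1" using ford_dvd[OF lnz] by simp
    also have "\<dots> \<longleftrightarrow> g ^ (k * n) = 1" by (simp add: power_mult)
    also have "\<dots> \<longleftrightarrow> k * m dvd k * n" using ford_dvd[OF g(1)] dN k by (simp add: mult.commute)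
    also have "\<dots> \<longleftrightarrow> m dvd n" using kpos by simp
    finally show ?thesis .
  qed
  have "ford ?lam = m" using eqv[of m] eqv[of "ford ?lam"] by (simp add: dvd_antisym)
  thus ?thesis using lnz by blast
qed

lemma fix_ex:
  fixes H :: "(('a::{field,finite})^2^2) set" assumes "H \<in> FixA m"
  shows "\<exists>l. l \<in> unitsmod m \<and> [l^2 = 1] (mod m) \<and> (\<exists>lam::'a. lam \<noteq> 0 \<and> ford lam = m \<and> H = cyc (dia lam (lam^l)))"
proof -
  from assms obtain g where g: "g \<in> Dgrp" "H = cyc g" "card H = m"
      "(\<lambda>M. amat ** M ** matrix_inv amat) ` H = H" unfolding FixA_def by blast
  from g(1) obtain d1 d2 :: 'a where d: "g = dia d1 d2" "d1 \<noteq> 0" "d2 \<noteq> 0" unfolding Dgrp_def by blast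
  have "dia d1 d2 = dia (d1^1) (d2^1)" by simp
  hence "dia d1 d2 \<in> H" unfolding g(2) d(1) cyc_dia by blast
  hence "amat ** dia d1 d2 ** matrix_inv amat \<in> (\<lambda>M. amat ** M ** matrix_inv amat) ` H" by (rule imageI)
  hence "dia d2 d1 \<in> H" using g(4) by (simp add: amat_inv amat_conj)
  then obtain k where "dia d2 d1 = dia (d1^k) (d2^k)" unfolding g(2) d(1) cyc_dia by blast
  hence k: "d2 = d1^k" "d1 = d2^k" unfolding dia_eq by blast+
  have Hk: "H = cyc (dia d1 (d1^k))" using g(2) d(1) k(1) by simp
  have fm: "ford d1 = m" using card_cyc[OF d(2), of k] Hk g(3) by simp
  have mpos: "m > 0" using ford_pos[OF d(2)] fm by simp
  have e: "d1 = (d1^k)^k" using k(2) by (subst (asm) k(1))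
  have "d1 ^ 1 = d1 ^ (k*k)" by (subst power_mult) (simp only: power_one_right e[symmetric])
  hence kk: "[1 = k*k] (mod m)" using iffD1[OF ford_eq[OF d(2), of 1 "k*k"]] fm by blast
  define l where "l = k mod m"
  have lk: "[l = k] (mod m)" unfolding l_def cong_def by simp
  have "[l^2 = k^2] (mod m)" using lk by (rule cong_pow)
  moreover have "[k^2 = 1] (mod m)" using kk by (simp add: power2_eq_square cong_sym_eq)
  ultimately have l2: "[l^2 = 1] (mod m)" by (rule cong_trans)
  have "coprime (l^2) m" using cong_imp_coprime[OF cong_sym[OF l2]] by simp
  hence "coprime l m" by simp
  moreover have "l < m" unfolding l_def using mpos by simp
  ultimately have lu: "l \<in> unitsmod m" by (simp add: unitsmod_def)
  have "d1^l = d1^k" using iffD2[OF ford_eq[OF d(2), of l k]] lk fm by simp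
  hence "H = cyc (dia d1 (d1^l))" using Hk by simp
  thus ?thesis using lu l2 d(2) fm by blast
qed

lemma conj_image:
  fixes lam :: "'a::{field,finite}"
  assumes "lam \<noteq> 0" "ford lam = m" "[l^2 = 1] (mod m)"
  shows "(\<lambda>M. amat ** M ** matrix_inv amat) ` cyc (dia lam (lam^l)) = cyc (dia lam (lam^l))"
proof -
  have f: "amat ** dia a b ** matrix_inv amat = dia b a" for a b :: 'a by (simp add: amat_inv amat_conj)
  have key: "lam^(l*(l*n)) = lam^n" for n
  proof -
    have "[l^2 * n = 1 * n] (mod m)" using assms(3) by (rule cong_scalar_right)
    hence "[l*(l*n) = n] (mod m)" by (simp add: power2_eq_square mult.assoc)
    thus ?thesis using ford_eq[OF assms(1)] assms(2) by simp
  qed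
  show ?thesis
  proof
    show "(\<lambda>M. amat ** M ** matrix_inv amat) ` cyc (dia lam (lam^l)) \<subseteq> cyc (dia lam (lam^l))"
    proof
      fix M assume "M \<in> (\<lambda>M. amat ** M ** matrix_inv amat) ` cyc (dia lam (lam^l))"
      then obtain M0 where M0: "M0 \<in> cyc (dia lam (lam^l))" "M = amat ** M0 ** matrix_inv amat" by blast
      from M0(1) obtain n where "M0 = dia (lam^n) (lam^(l*n))" unfolding mem_cyc_pow by blast
      hence "M = amat ** dia (lam^n) (lam^(l*n)) ** matrix_inv amat" using M0(2) by simp
      hence "M = dia (lam^(l*n)) (lam^(l*(l*n)))" using f key by simp
      thus "M \<in> cyc (dia lam (lam^l))" unfolding mem_cyc_pow by blast
    qed
    show "cyc (dia lam (lam^l)) \<subseteq> (\<lambda>M. amat ** M ** matrix_inv amat) ` cyc (dia lam (lam^l))"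
    proof
      fix M assume "M \<in> cyc (dia lam (lam^l))"
      then obtain n where n: "M = dia (lam^n) (lam^(l*n))" unfolding mem_cyc_pow by blast
      have "dia (lam^(l*n)) (lam^(l*(l*n))) \<in> cyc (dia lam (lam^l))" unfolding mem_cyc_pow by blast
      moreover have "M = amat ** dia (lam^(l*n)) (lam^(l*(l*n))) ** matrix_inv amat"
        using n f key by simp
      ultimately show "M \<in> (\<lambda>M. amat ** M ** matrix_inv amat) ` cyc (dia lam (lam^l))" by blast
    qed
  qed
qed

lemma p5: "prime (5::nat)"
proof -
  have "\<forall>n. 2 \<le> n \<and> n < (5::nat) \<longrightarrow> n = 2 \<or> n = 3 \<or> n = 4" by presburger
  hence "\<forall>n\<in>{2..<5}. \<not> n dvd (5::nat)" by (auto simp: dvd_eq_mod_eq_0)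
  thus ?thesis by (simp add: prime_nat_iff')
qed

lemma c83: "coprime (8::nat) 3"
proof -
  have "coprime (2::nat) 3" using coprime_Suc_right_nat[of 2] by simp
  hence "coprime ((2::nat)^3) 3" using coprime_power_left_iff[of "2::nat" 3 3] by blast
  moreover have "(2::nat)^3 = 8" by simp
  ultimately show ?thesis by metis
qed

lemma le24: "(m::nat) \<le> 24 \<Longrightarrow> m = 0 \<or> m = 1 \<or> m = 2 \<or> m = 3 \<or> m = 4 \<or> m = 5 \<or> m = 6 \<or> m = 7 \<or> m = 8 \<or> m = 9 \<or> m = 10 \<or> m = 11 \<or> m = 12 \<or> m = 13 \<or> m = 14 \<or> m = 15 \<or> m = 16 \<or> m = 17 \<or> m = 18 \<or> m = 19 \<or> m = 20 \<or> m = 21 \<or> m = 22 \<or> m = 23 \<or> m = 24"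
  by presburger

lemma divs24: "(m::nat) dvd 24 \<Longrightarrow> m \<in> {1,2,3,4,6,8,12,24}"
proof -
  assume h: "m dvd 24"
  hence "m \<le> 24" by (rule dvd_imp_le) simp
  from le24[OF this] h show ?thesis by auto
qed

lemma dvd24_iff: "(m::nat) dvd 24 \<longleftrightarrow> (\<exists>t s. t \<le> 3 \<and> s \<le> 1 \<and> m = 2 ^ t * 3 ^ s)"
proof
  assume "m dvd 24"
  hence "m \<in> {1,2,3,4,6,8,12,24}" by (rule divs24)
  thus "\<exists>t s. t \<le> 3 \<and> s \<le> 1 \<and> m = 2 ^ t * 3 ^ s"
  proof (elim insertE emptyE)
    assume "m = 1" thus ?thesis by (intro exI[of _ 0]) simp
  next
    assume "m = 2" thus ?thesis by (intro exI[of _ 1] exI[of _ 0]) simp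
  next
    assume "m = 3" thus ?thesis by (intro exI[of _ 0] exI[of _ 1]) simp
  next
    assume "m = 4" thus ?thesis by (intro exI[of _ 2] exI[of _ 0]) simp
  next
    assume "m = 6" thus ?thesis by (intro exI[of _ 1] exI[of _ 1]) simp
  next
    assume "m = 8" thus ?thesis by (intro exI[of _ 3] exI[of _ 0]) simp
  next
    assume "m = 12" thus ?thesis by (intro exI[of _ 2] exI[of _ 1]) simp
  next
    assume "m = 24" thus ?thesis by (intro exI[of _ 3] exI[of _ 1]) simp
  qed
next
  assume "\<exists>t s. t \<le> 3 \<and> s \<le> 1 \<and> m = 2 ^ t * 3 ^ s"
  then obtain t s where ts: "t \<le> 3" "s \<le> 1" "m = 2 ^ t * 3 ^ s" by blast
  have "2^t dvd (2::nat)^3" using ts(1) by (rule power_le_dvd[OF dvd_refl])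
  moreover have "3^s dvd (3::nat)^1" using ts(2) by (rule power_le_dvd[OF dvd_refl])
  ultimately have "2^t * 3^s dvd (2::nat)^3 * 3^1" by (rule mult_dvd_mono)
  thus "m dvd 24" using ts(3) by simp
qed

lemma odd_sq8: "odd (l::nat) \<Longrightarrow> [l^2 = 1] (mod 8)"
proof -
  assume "odd l"
  hence "l mod 8 = 1 \<or> l mod 8 = 3 \<or> l mod 8 = 5 \<or> l mod 8 = 7" by presburger
  moreover have "l^2 mod 8 = (l mod 8)^2 mod 8" by (simp add: power_mod)
  ultimately show ?thesis unfolding cong_def by auto
qed

lemma sq3: "\<not> 3 dvd (l::nat) \<Longrightarrow> [l^2 = 1] (mod 3)"
proof -
  assume "\<not> 3 dvd l"
  hence "l mod 3 = 1 \<or> l mod 3 = 2" by presburger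
  moreover have "l^2 mod 3 = (l mod 3)^2 mod 3" by (simp add: power_mod)
  ultimately show ?thesis unfolding cong_def by auto
qed

lemma dvd24_sq: assumes "(m::nat) dvd 24" "coprime l m" shows "[l^2 = 1] (mod m)"
proof -
  have odd: "odd l" if "2 dvd m"
  proof
    assume "even l" thus False using coprime_common_divisor[OF assms(2) _ that] by simp
  qed
  have n3: "\<not> 3 dvd l" if "3 dvd m"
  proof
    assume "3 dvd l" thus False using coprime_common_divisor[OF assms(2) _ that] by simp
  qed
  have "m \<in> {1,2,3,4,6,8,12,24}" using assms(1) by (rule divs24)
  moreover {
    assume "m dvd 8" "2 dvd m"
    hence ?thesis using odd_sq8[OF odd] cong_dvd_modulus_nat by blast }
  moreover {
    assume "m dvd 24" "2 dvd m" "3 dvd m"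
    hence "[l^2 = 1] (mod 8 * 3)" using coprime_cong_mult_nat[OF odd_sq8[OF odd] sq3[OF n3] c83] by blast
    hence ?thesis using \<open>m dvd 24\<close> cong_dvd_modulus_nat by simp }
  moreover {
    assume "m = 3" hence ?thesis using sq3[OF n3] by simp }
  ultimately show ?thesis by auto
qed

lemma not_dvd24: assumes "(m::nat) > 0" "\<not> m dvd 24"
  shows "\<exists>l. l < m \<and> coprime l m \<and> \<not> [l^2 = 1] (mod m)"
proof (cases "5 dvd m")
  case False
  have "m \<noteq> 1" "m \<noteq> 2" "m \<noteq> 3" "m \<noteq> 4" "m \<noteq> 6" using assms(2) by auto
  moreover have "m \<noteq> 5" using False by auto
  ultimately have "5 < m" using assms(1) by linarith
  moreover have "coprime 5 m" using prime_imp_coprime[OF p5 False] .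
  moreover have "\<not> [5^2 = 1] (mod m)"
  proof
    assume "[5^2 = 1] (mod m)"
    hence "m dvd 5^2 - 1" by (simp add: cong_altdef_nat)
    thus False using assms(2) by simp
  qed
  ultimately show ?thesis by blast
next
  case True
  then obtain w where w: "m = 5 * w" by blast
  have wpos: "w > 0" using w assms(1) by simp
  have key: "\<exists>l. l < m \<and> coprime l m \<and> \<not> [l^2 = 1] (mod m)"
    if j1: "\<not> 5 dvd (1 + w*j)" and j2: "\<not> 5 dvd j * (2 + w*j)" for j
  proof -
    let ?l = "1 + w*j"
    have "coprime ?l w"
    proof -
      have "(1 + j*w) mod w = 1 mod w" by (rule mod_mult_self1)
      hence "[1 = ?l] (mod w)" by (simp add: cong_def mult.commute)
      moreover have "coprime 1 w" by simp
      ultimately show ?thesis by (rule cong_imp_coprime)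
    qed
    moreover have "coprime ?l 5" using prime_imp_coprime[OF p5 j1] by (simp add: ac_simps)
    ultimately have cop: "coprime ?l m" using w by simp
    have "?l^2 - 1 = w * (j * (2 + w*j))" by (simp add: power2_eq_square algebra_simps)
    have nc: "\<not> [?l^2 = 1] (mod m)"
    proof
      assume "[?l^2 = 1] (mod m)"
      hence "m dvd ?l^2 - 1" by (simp add: cong_altdef_nat)
      also have "?l^2 - 1 = w * (j * (2 + w*j))" by (simp add: power2_eq_square algebra_simps)
      finally have "w * 5 dvd w * (j * (2 + w*j))" using w by (simp add: ac_simps)
      thus False using wpos j2 by simp
    qed
    show ?thesis
    proof (intro exI conjI)
      show "?l mod m < m" using assms(1) by simp
      show "coprime (?l mod m) m" using cop assms(1) by simp
      show "\<not> [(?l mod m)^2 = 1] (mod m)" using nc by (simp add: cong_def power_mod)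
    qed
  qed
  show ?thesis
  proof (cases "5 dvd w")
    case True
    show ?thesis
    proof (rule key[of 1])
      show "\<not> 5 dvd (1 + w*1)" using True by presburger
      show "\<not> 5 dvd 1 * (2 + w*1)" using True by presburger
    qed
  next
    case False
    have w4: "w^4 mod 5 = 1"
    proof -
      have "w mod 5 = 1 \<or> w mod 5 = 2 \<or> w mod 5 = 3 \<or> w mod 5 = 4" using False by presburger
      moreover have "w^4 mod 5 = (w mod 5)^4 mod 5" by (simp add: power_mod)
      ultimately show ?thesis by auto
    qed
    have e: "w * w^3 = w^4" by (simp add: power_numeral_reduce)
    show ?thesis
    proof (rule key[of "w^3"])
      show "\<not> 5 dvd (1 + w*w^3)" using w4 unfolding e by presburger
      have "\<not> 5 dvd w^3" using False prime_dvd_power[OF p5] by blast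
      moreover have "\<not> 5 dvd (2 + w*w^3)" using w4 unfolding e by presburger
      ultimately show "\<not> 5 dvd w^3 * (2 + w*w^3)" using prime_dvd_mult_iff[OF p5] by blast
    qed
  qed
qed


theorem mainTheorem7:
  fixes m :: nat
  assumes "m > 0" and "m dvd CARD('a::{field,finite}) - 1"
  shows "(\<forall>H \<in> (FixA m :: ('a^2^2) set set).
            \<exists>!l. l \<in> unitsmod m \<and> [l ^ 2 = 1] (mod m) \<and>
               (\<exists>lam::'a. lam \<noteq> 0 \<and> ford lam = m \<and> H = cyc (dia lam (lam ^ l))))
         \<and> (bij_betw (fixmap m) (FixA m :: ('a^2^2) set set) (unitsmod m)
            \<longleftrightarrow> (\<exists>t s. t \<le> 3 \<and> s \<le> 1 \<and> m = 2 ^ t * 3 ^ s))"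
proof -
  define P where "P H l \<longleftrightarrow> l \<in> unitsmod m \<and> [l ^ 2 = 1] (mod m) \<and>
               (\<exists>lam::'a. lam \<noteq> 0 \<and> ford lam = m \<and> H = cyc (dia lam (lam ^ l)))"
    for H :: "('a^2^2) set" and l
  have uniq: "l1 = l2" if "P H l1" "P H l2" for H l1 l2
  proof -
    have a1: "l1 < m" "\<exists>lam::'a. lam \<noteq> 0 \<and> ford lam = m \<and> H = cyc (dia lam (lam ^ l1))"
      using that(1) unfolding P_def unitsmod_def by simp_all
    have a2: "l2 < m" "\<exists>lam::'a. lam \<noteq> 0 \<and> ford lam = m \<and> H = cyc (dia lam (lam ^ l2))"
      using that(2) unfolding P_def unitsmod_def by simp_all
    from a1(2) obtain lam :: 'a where lam: "lam \<noteq> 0" "ford lam = m" "H = cyc (dia lam (lam ^ l1))"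
      by blast
    from a2(2) obtain mu :: 'a where mu: "mu \<noteq> 0" "ford mu = m" "H = cyc (dia mu (mu ^ l2))"
      by blast
    have "cyc (dia lam (lam ^ l1)) = cyc (dia mu (mu ^ l2))" using lam(3) mu(3) by simp
    thus ?thesis by (rule fix_uniq[OF lam(1) mu(1) lam(2) mu(2) a1(1) a2(1)])
  qed
  have ex1: "\<exists>!l. P H l" if "H \<in> FixA m" for H
  proof -
    from fix_ex[OF that] obtain l where "P H l" unfolding P_def by blast
    show ?thesis
    proof (rule ex1I)
      show "P H l" by fact
      fix y assume "P H y" thus "y = l" using \<open>P H l\<close> by (rule uniq)
    qed
  qed
  have fm: "P H (fixmap m H)" if "H \<in> FixA m" for H
  proof -
    have "fixmap m H = (THE l. P H l)" unfolding fixmap_def P_def by simp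
    thus ?thesis using theI'[OF ex1[OF that]] by simp
  qed
  have fm_eq: "fixmap m H = l" if "H \<in> FixA m" "P H l" for H l
    using uniq[OF fm[OF that(1)] that(2)] .
  have inj: "inj_on (fixmap m) (FixA m :: ('a^2^2) set set)"
  proof (rule inj_onI)
    fix H1 H2 :: "('a^2^2) set" assume h: "H1 \<in> FixA m" "H2 \<in> FixA m" "fixmap m H1 = fixmap m H2"
    obtain lam where lam: "lam \<noteq> 0" "ford lam = m" "H1 = cyc (dia lam (lam ^ fixmap m H1))"
      using fm[OF h(1)] unfolding P_def by blast
    obtain mu where mu: "mu \<noteq> 0" "ford mu = m" "H2 = cyc (dia mu (mu ^ fixmap m H1))"
      using fm[OF h(2)] h(3) unfolding P_def by auto
    show "H1 = H2" using cyc_same[OF lam(1) mu(1) lam(2) mu(2)] lam(3) mu(3) by simp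
  qed
  have sub: "fixmap m ` (FixA m :: ('a^2^2) set set) \<subseteq> unitsmod m" using fm unfolding P_def by blast
  have bij_iff: "bij_betw (fixmap m) (FixA m :: ('a^2^2) set set) (unitsmod m) \<longleftrightarrow> m dvd 24"
  proof
    assume b: "bij_betw (fixmap m) (FixA m :: ('a^2^2) set set) (unitsmod m)"
    show "m dvd 24"
    proof (rule ccontr)
      assume "\<not> m dvd 24"
      then obtain l where l: "l < m" "coprime l m" "\<not> [l^2 = 1] (mod m)"
        using not_dvd24[OF assms(1)] by blast
      hence "l \<in> unitsmod m" by (simp add: unitsmod_def)
      hence "l \<in> fixmap m ` (FixA m :: ('a^2^2) set set)" using b unfolding bij_betw_def by simp
      then obtain H where "H \<in> (FixA m :: ('a^2^2) set set)" "l = fixmap m H" by blast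
      hence "[l^2 = 1] (mod m)" using fm unfolding P_def by blast
      thus False using l(3) by simp
    qed
  next
    assume d: "m dvd 24"
    have "unitsmod m \<subseteq> fixmap m ` (FixA m :: ('a^2^2) set set)"
    proof
      fix l assume lu: "l \<in> unitsmod m"
      hence l2: "[l^2 = 1] (mod m)" using dvd24_sq[OF d] by (simp add: unitsmod_def)
      obtain lam :: 'a where lam: "lam \<noteq> 0" "ford lam = m" using ord_exists[OF assms] by blast
      let ?H = "cyc (dia lam (lam ^ l))"
      have "?H \<in> FixA m" unfolding FixA_def
      proof (intro CollectI conjI)
        have "dia lam (lam ^ l) \<in> Dgrp" using lam(1) unfolding Dgrp_def by (intro CollectI exI[of _ lam] exI[of _ "lam ^ l"]) simp
        thus "\<exists>g\<in>Dgrp. ?H = cyc g" by blast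
        show "card ?H = m" using card_cyc[OF lam(1)] lam(2) by simp
        show "(\<lambda>M. amat ** M ** matrix_inv amat) ` ?H = ?H" by (rule conj_image[OF lam l2])
      qed
      moreover have "P ?H l" unfolding P_def using lu l2 lam by blast
      ultimately show "l \<in> fixmap m ` (FixA m :: ('a^2^2) set set)" using fm_eq by (metis image_eqI)
    qed
    thus "bij_betw (fixmap m) (FixA m :: ('a^2^2) set set) (unitsmod m)"
      using inj sub unfolding bij_betw_def by blast
  qed
  have part1: "\<forall>H \<in> (FixA m :: ('a^2^2) set set). \<exists>!l. P H l" using ex1 by blast
  show ?thesis using part1 bij_iff dvd24_iff unfolding P_def by simp
qed


end
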